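(* Let $\mathcal{A}$ and $\mathcal{B}$ be inequivalent sharp qubit observables given by unit vectors $\vec a,\vec b\in\mathbb{R}^3$ (so $\vec a\neq\pm\vec b$), and let $\theta_{\vec a\vec b}$ be the angle between $\vec a$ and $\vec b$. Then unambiguous discrimination of $\mathcal{A}$ and $\mathcal{B}$ is possible in four shots, with success probability $P_{\rm succ}\ge\sin^2\theta_{\vec a\vec b}$ for every a priori distribution $(\eta,1-\eta)$. That is, there exist a state $\varrho$ on $(\mathbb{C}^2)^{\otimes 4}$ and a partition of $\Omega^4$ ($\Omega=\{\omega_1,\omega_2\}$) into disjoint subsets $R_{\mathcal{A}},R_{\mathcal{B}},R_?$, each invariant under swapping the labels $\omega_1\leftrightarrow\omega_2$ in all four entries, such that $p^{\mathcal{B}}_\varrho(\omega)=0$ for all $\omega\in R_{\mathcal{A}}$, $p^{\mathcal{A}}_\varrho(\omega)=0$ for all $\omega\in R_{\mathcal{B}}$, and $\eta\,p^{\mathcal{A}}_\varrho(R_{\mathcal{A}})+(1-\eta)\,p^{\mathcal{B}}_\varrho(R_{\mathcal{B}})\ge\sin^2\theta_{\vec a\vec b}$ for all $\eta\in[0,1]$ (in particular $p^{\mathcal{A}}_\varrho(R_{\mathcal{A}})>0$ and $p^{\mathcal{B}}_\varrho(R_{\mathcal{B}})>0$).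
   Context: A sharp qubit observable given by a unit vector $\vec a\in\mathbb{R}^3$ has outcome set $\Omega=\{\omega_1,\omega_2\}$ and effects $\mathcal{A}_1=\frac12(I+\vec a\cdot\vec\sigma)$, $\mathcal{A}_2=\frac12(I-\vec a\cdot\vec\sigma)$ on $\mathbb{C}^2$ ($\vec\sigma$ the Pauli matrices); two such observables are equivalent if they coincide up to relabeling outcomes, i.e. $\vec b=\pm\vec a$. For a state $\varrho$ on $(\mathbb{C}^2)^{\otimes 4}$ and $\omega=(\omega_{j_1},\ldots,\omega_{j_4})\in\Omega^4$, $p^{\mathcal{A}}_\varrho(\omega)=\mathrm{tr}[\varrho\,\mathcal{A}_{j_1}\otimes\cdots\otimes\mathcal{A}_{j_4}]$, and $p^{\mathcal{A}}_\varrho(R)=\sum_{\omega\in R}p^{\mathcal{A}}_\varrho(\omega)$. The unknown apparatus (either $\mathcal{A}$ or $\mathcal{B}$, with a priori probabilities $\eta$ and $1-\eta$, outcome labels unknown) is applied to each of the four subsystems; results in $R_{\mathcal{A}}$ (resp. $R_{\mathcal{B}}$) lead to the error-free conclusion $\mathcal{A}$ (resp. $\mathcal{B}$), results in $R_?$ are inconclusive. *)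

theory Defs
  imports "HOL-Analysis.Analysis"
begin

text \<open>A qubit basis index is a bool (False = |0>, True = |1>).
  An outcome in Omega = {omega1, omega2} is a bool (True = omega1, False = omega2).
  Four-fold objects (basis indices of (C^2)^(tensor 4), outcomes in Omega^4) are
  bool lists of length 4. Operators are functions bool list => bool list => complex
  (only entries on length-4 lists matter).\<close>

definition four_lists :: "bool list set" where
  "four_lists = {xs. length xs = 4}"

text \<open>Pauli matrices (rows index first).\<close>
definition sigma_x :: "bool \<Rightarrow> bool \<Rightarrow> complex" where
  "sigma_x i j = (if i \<noteq> j then 1 else 0)"
definition sigma_y :: "bool \<Rightarrow> bool \<Rightarrow> complex" where
  "sigma_y i j = (if i = j then 0 else if i then \<i> else - \<i>)"
definition sigma_z :: "bool \<Rightarrow> bool \<Rightarrow> complex" where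
  "sigma_z i j = (if i = j then (if i then -1 else 1) else 0)"
definition id2 :: "bool \<Rightarrow> bool \<Rightarrow> complex" where
  "id2 i j = (if i = j then 1 else 0)"

definition qubit_effect :: "real^3 \<Rightarrow> bool \<Rightarrow> bool \<Rightarrow> bool \<Rightarrow> complex" where
  "qubit_effect a s i j = (1/2) * (id2 i j + (if s then 1 else -1) *
      (complex_of_real (a$1) * sigma_x i j + complex_of_real (a$2) * sigma_y i j
       + complex_of_real (a$3) * sigma_z i j))"

definition effect4 :: "real^3 \<Rightarrow> bool list \<Rightarrow> bool list \<Rightarrow> bool list \<Rightarrow> complex" where
  "effect4 a \<omega> x y = (\<Prod>k<4. qubit_effect a (\<omega> ! k) (x ! k) (y ! k))"

definition density4 :: "(bool list \<Rightarrow> bool list \<Rightarrow> complex) \<Rightarrow> bool" where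
  "density4 \<rho> \<longleftrightarrow>
     (\<forall>x\<in>four_lists. \<forall>y\<in>four_lists. \<rho> x y = cnj (\<rho> y x)) \<and>
     (\<forall>v :: bool list \<Rightarrow> complex.
        0 \<le> Re (\<Sum>x\<in>four_lists. \<Sum>y\<in>four_lists. cnj (v x) * \<rho> x y * v y)) \<and>
     (\<Sum>x\<in>four_lists. \<rho> x x) = 1"

text \<open>p^A_rho(omega) = tr[rho A_{j1} (x) ... (x) A_{j4}] (a real number for a state).\<close>
definition prob4 :: "(bool list \<Rightarrow> bool list \<Rightarrow> complex) \<Rightarrow> real^3 \<Rightarrow> bool list \<Rightarrow> real" where
  "prob4 \<rho> a \<omega> = Re (\<Sum>x\<in>four_lists. \<Sum>y\<in>four_lists. \<rho> x y * effect4 a \<omega> y x)"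

definition prob4_set :: "(bool list \<Rightarrow> bool list \<Rightarrow> complex) \<Rightarrow> real^3 \<Rightarrow> bool list set \<Rightarrow> real" where
  "prob4_set \<rho> a R = (\<Sum>\<omega>\<in>R. prob4 \<rho> a \<omega>)"

definition relabel_invariant :: "bool list set \<Rightarrow> bool" where
  "relabel_invariant R \<longleftrightarrow> (\<forall>\<omega>\<in>R. map Not \<omega> \<in> R)"

definition angle3 :: "real^3 \<Rightarrow> real^3 \<Rightarrow> real" where
  "angle3 a b = arccos ((a \<bullet> b) / (norm a * norm b))"

end

theory Submission
  imports Defs
begin

definition nsig :: "real^3 \<Rightarrow> bool \<Rightarrow> bool \<Rightarrow> complex" where
  "nsig n i j = complex_of_real (n$1) * sigma_x i j + complex_of_real (n$2) * sigma_y i j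
       + complex_of_real (n$3) * sigma_z i j"
definition phi :: "real^3 \<Rightarrow> bool \<Rightarrow> bool \<Rightarrow> complex" where
  "phi n p q = (if q then nsig n p False else - nsig n p True)"
definition T2 :: "real^3 \<Rightarrow> real^3 \<Rightarrow> bool \<Rightarrow> bool \<Rightarrow> complex" where
  "T2 n m s t = (\<Sum>p\<in>UNIV. \<Sum>q\<in>UNIV. \<Sum>p'\<in>UNIV. \<Sum>q'\<in>UNIV.
      phi n p q * cnj (phi n p' q') * qubit_effect m s p' p * qubit_effect m t q' q)"

lemma nsig_simps:
  "nsig n False False = complex_of_real (n$3)"
  "nsig n False True = Complex (n$1) (- n$2)"
  "nsig n True False = Complex (n$1) (n$2)"
  "nsig n True True = complex_of_real (- n$3)"
  by (simp_all add: nsig_def sigma_x_def sigma_y_def sigma_z_def complex_eq_iff)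

lemma phi_simps:
  "phi n False True = complex_of_real (n$3)"
  "phi n False False = Complex (- n$1) (n$2)"
  "phi n True True = Complex (n$1) (n$2)"
  "phi n True False = complex_of_real (n$3)"
  by (simp_all add: phi_def nsig_simps complex_eq_iff)

lemma qe_simps:
  "qubit_effect m s False False = complex_of_real ((1 + (if s then 1 else -1) * m$3)/2)"
  "qubit_effect m s True True = complex_of_real ((1 - (if s then 1 else -1) * m$3)/2)"
  "qubit_effect m s False True = Complex ((if s then 1 else -1) * m$1/2) (- (if s then 1 else -1) * m$2/2)"
  "qubit_effect m s True False = Complex ((if s then 1 else -1) * m$1/2) ((if s then 1 else -1) * m$2/2)"
  by (simp_all add: qubit_effect_def sigma_x_def sigma_y_def sigma_z_def id2_def complex_eq_iff)

lemma T2_poly: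
  "T2 n m s t = complex_of_real (((n$1)^2 + (n$2)^2 + (n$3)^2
     + (if s = t then 1 else -1) * (((n$1)^2 + (n$2)^2 + (n$3)^2) * ((m$1)^2 + (m$2)^2 + (m$3)^2)
         - 2 * (n$1 * m$1 + n$2 * m$2 + n$3 * m$3)^2)) / 2)"
  unfolding T2_def
  apply (cases s; cases t)
  apply (simp_all add: UNIV_bool phi_simps qe_simps complex_eq_iff)
  by (simp_all add: algebra_simps power2_eq_square divide_simps)

lemma unit3: assumes "norm (n::real^3) = 1" shows "(n$1)^2 + (n$2)^2 + (n$3)^2 = 1"
proof -
  have "n \<bullet> n = 1" using assms by (simp add: norm_eq_1)
  thus ?thesis by (simp add: inner_vec_def sum_3 power2_eq_square)
qed

lemma T2_val:
  assumes "norm n = 1" "norm m = 1"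
  shows "T2 n m s t = complex_of_real (if s = t then 1 - (n \<bullet> m)^2 else (n \<bullet> m)^2)"
proof -
  have ip: "n \<bullet> m = n$1 * m$1 + n$2 * m$2 + n$3 * m$3"
    by (simp add: inner_vec_def sum_3)
  show ?thesis unfolding T2_poly unit3[OF assms(1)] unit3[OF assms(2)] ip[symmetric]
    by (simp add: algebra_simps)
qed

lemma four_lists_eq: "four_lists = (\<lambda>(p,q,r,s). [p,q,r,s]) ` UNIV"
proof -
  have "length x = 4 \<Longrightarrow> \<exists>p q r s. x = [p,q,r,s]" for x :: "bool list"
    by (cases x rule: list.exhaust; cases "tl x" rule: list.exhaust; cases "tl (tl x)" rule: list.exhaust;
        cases "tl (tl (tl x))" rule: list.exhaust; auto)
  thus ?thesis unfolding four_lists_def by (auto simp: image_iff)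
qed

lemma sum_four:
  "(\<Sum>x\<in>four_lists. h x) = (\<Sum>p\<in>UNIV. \<Sum>q\<in>UNIV. \<Sum>r\<in>UNIV. \<Sum>s\<in>UNIV. h [p,q,r,s])"
proof -
  have inj: "inj (\<lambda>(p::bool,q::bool,r::bool,s::bool). [p,q,r,s])"
    by (auto simp: inj_def)
  have "(\<Sum>x\<in>four_lists. h x) = (\<Sum>(p,q,r,s)\<in>UNIV. h [p,q,r,s])"
    unfolding four_lists_eq by (subst sum.reindex[OF inj]) (simp add: case_prod_beta)
  also have "\<dots> = (\<Sum>p\<in>UNIV. \<Sum>q\<in>UNIV. \<Sum>r\<in>UNIV. \<Sum>s\<in>UNIV. h [p,q,r,s])"
    by (simp add: UNIV_bool UNIV_Times_UNIV[symmetric] sum.cartesian_product[symmetric] add.assoc del: UNIV_Times_UNIV)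
  finally show ?thesis .
qed

lemma finite_four: "finite four_lists"
  unfolding four_lists_eq by simp

lemma factor1:
  "(\<Sum>x\<in>four_lists. F (x!0) (x!1) * G (x!2) (x!3)) =
   (\<Sum>p\<in>UNIV. \<Sum>q\<in>UNIV. F p q) * (\<Sum>r\<in>UNIV. \<Sum>s\<in>UNIV. (G r s :: complex))"
  by (simp add: sum_four UNIV_bool algebra_simps)

lemma factor2:
  "(\<Sum>x\<in>four_lists. \<Sum>y\<in>four_lists. F (x!0) (x!1) (y!0) (y!1) * G (x!2) (x!3) (y!2) (y!3)) =
   (\<Sum>p\<in>UNIV. \<Sum>q\<in>UNIV. \<Sum>p'\<in>UNIV. \<Sum>q'\<in>UNIV. F p q p' q') *
   (\<Sum>r\<in>UNIV. \<Sum>s\<in>UNIV. \<Sum>r'\<in>UNIV. \<Sum>s'\<in>UNIV. (G r s r' s' :: complex))"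
proof -
  have sw: "\<And>f::bool\<Rightarrow>bool\<Rightarrow>bool\<Rightarrow>bool\<Rightarrow>complex.
    (\<Sum>r\<in>UNIV. \<Sum>s\<in>UNIV. \<Sum>p'\<in>UNIV. \<Sum>q'\<in>UNIV. f r s p' q') =
    (\<Sum>p'\<in>UNIV. \<Sum>q'\<in>UNIV. \<Sum>r\<in>UNIV. \<Sum>s\<in>UNIV. f r s p' q')"
    by (simp add: UNIV_bool algebra_simps)
  have "(\<Sum>x\<in>four_lists. \<Sum>y\<in>four_lists. F (x!0) (x!1) (y!0) (y!1) * G (x!2) (x!3) (y!2) (y!3))
     = (\<Sum>p\<in>UNIV. \<Sum>q\<in>UNIV. \<Sum>r\<in>UNIV. \<Sum>s\<in>UNIV. \<Sum>p'\<in>UNIV. \<Sum>q'\<in>UNIV. \<Sum>r'\<in>UNIV. \<Sum>s'\<in>UNIV.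
          F p q p' q' * G r s r' s')"
    by (simp add: sum_four)
  also have "\<dots> = (\<Sum>p\<in>UNIV. \<Sum>q\<in>UNIV. \<Sum>p'\<in>UNIV. \<Sum>q'\<in>UNIV. \<Sum>r\<in>UNIV. \<Sum>s\<in>UNIV. \<Sum>r'\<in>UNIV. \<Sum>s'\<in>UNIV.
          F p q p' q' * G r s r' s')"
    by (subst sw) (rule refl)
  also have "\<dots> = (\<Sum>p\<in>UNIV. \<Sum>q\<in>UNIV. \<Sum>p'\<in>UNIV. \<Sum>q'\<in>UNIV. F p q p' q') *
   (\<Sum>r\<in>UNIV. \<Sum>s\<in>UNIV. \<Sum>r'\<in>UNIV. \<Sum>s'\<in>UNIV. (G r s r' s' :: complex))"
    by (simp only: sum_distrib_right, simp only: sum_distrib_left)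
  finally show ?thesis .
qed

definition psi :: "real^3 \<Rightarrow> real^3 \<Rightarrow> bool list \<Rightarrow> complex" where
  "psi b a x = phi b (x!0) (x!1) * phi a (x!2) (x!3)"
definition rho :: "real^3 \<Rightarrow> real^3 \<Rightarrow> bool list \<Rightarrow> bool list \<Rightarrow> complex" where
  "rho b a x y = psi b a x * cnj (psi b a y) / 4"

lemma phi_norm: "(\<Sum>p\<in>UNIV. \<Sum>q\<in>UNIV. phi n p q * cnj (phi n p q)) =
    complex_of_real (2 * ((n$1)^2 + (n$2)^2 + (n$3)^2))"
  by (simp add: UNIV_bool phi_simps complex_eq_iff algebra_simps power2_eq_square)

lemma density_rho:
  assumes "norm a = 1" "norm b = 1"
  shows "density4 (rho b a)"
  unfolding density4_def
proof (intro conjI ballI allI)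
  fix x y show "rho b a x y = cnj (rho b a y x)" by (simp add: rho_def)
next
  fix v :: "bool list \<Rightarrow> complex"
  define z where "z = (\<Sum>x\<in>four_lists. cnj (v x) * psi b a x)"
  have "(\<Sum>x\<in>four_lists. \<Sum>y\<in>four_lists. cnj (v x) * rho b a x y * v y) = z * cnj z / 4"
    unfolding z_def rho_def cnj_sum sum_product sum_divide_distrib by (simp add: mult_ac)
  also have "\<dots> = complex_of_real ((cmod z)^2 / 4)"
    by (simp add: complex_mult_cnj cmod_power2)
  finally have e: "(\<Sum>x\<in>four_lists. \<Sum>y\<in>four_lists. cnj (v x) * rho b a x y * v y) = complex_of_real ((cmod z)^2 / 4)" .
  show "0 \<le> Re (\<Sum>x\<in>four_lists. \<Sum>y\<in>four_lists. cnj (v x) * rho b a x y * v y)"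
    unfolding e Re_complex_of_real by simp
next
  have "(\<Sum>x\<in>four_lists. rho b a x x) =
      (\<Sum>x\<in>four_lists. (phi b (x!0) (x!1) * cnj (phi b (x!0) (x!1)) / 4) * (phi a (x!2) (x!3) * cnj (phi a (x!2) (x!3))))"
    by (simp add: rho_def psi_def mult_ac)
  also have "\<dots> = (\<Sum>p\<in>UNIV. \<Sum>q\<in>UNIV. phi b p q * cnj (phi b p q)) / 4 * (\<Sum>p\<in>UNIV. \<Sum>q\<in>UNIV. phi a p q * cnj (phi a p q))"
    by (subst factor1) (simp add: sum_divide_distrib)
  also have "\<dots> = 1"
    unfolding phi_norm unit3[OF assms(1)] unit3[OF assms(2)] by simp
  finally show "(\<Sum>x\<in>four_lists. rho b a x x) = 1" .
qed

lemma prob_val: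
  "prob4 (rho b a) X [w0,w1,w2,w3] = Re (T2 b X w0 w1 * T2 a X w2 w3) / 4"
proof -
  have "(\<Sum>x\<in>four_lists. \<Sum>y\<in>four_lists. rho b a x y * effect4 X [w0,w1,w2,w3] y x) =
    (\<Sum>x\<in>four_lists. \<Sum>y\<in>four_lists.
      (phi b (x!0) (x!1) * cnj (phi b (y!0) (y!1)) * qubit_effect X w0 (y!0) (x!0) * qubit_effect X w1 (y!1) (x!1) / 4) *
      (phi a (x!2) (x!3) * cnj (phi a (y!2) (y!3)) * qubit_effect X w2 (y!2) (x!2) * qubit_effect X w3 (y!3) (x!3)))"
    by (simp add: rho_def psi_def effect4_def numeral_eq_Suc lessThan_Suc mult_ac)
  also have "\<dots> = T2 b X w0 w1 / 4 * T2 a X w2 w3"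
    by (subst factor2) (simp add: T2_def sum_divide_distrib)
  also have "\<dots> = (T2 b X w0 w1 * T2 a X w2 w3) / 4" by simp
  finally have e: "(\<Sum>x\<in>four_lists. \<Sum>y\<in>four_lists. rho b a x y * effect4 X [w0,w1,w2,w3] y x) = (T2 b X w0 w1 * T2 a X w2 w3) / 4" .
  show ?thesis unfolding prob4_def e by (simp only: Re_divide_numeral)
qed

lemma probB:
  assumes "norm a = 1" "norm b = 1"
  shows "prob4 (rho b a) b [w0,w1,w2,w3] =
    (if w0 = w1 then 0 else 1) * (if w2 = w3 then 1 - (a \<bullet> b)^2 else (a \<bullet> b)^2) / 4"
proof -
  have bb: "b \<bullet> b = 1" using assms by (simp add: norm_eq_1)
  show ?thesis unfolding prob_val T2_val[OF assms(2) assms(2)] T2_val[OF assms(1) assms(2)] bb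
    by (simp del: of_real_power of_real_diff)
qed

lemma probA:
  assumes "norm a = 1" "norm b = 1"
  shows "prob4 (rho b a) a [w0,w1,w2,w3] =
    (if w0 = w1 then 1 - (a \<bullet> b)^2 else (a \<bullet> b)^2) * (if w2 = w3 then 0 else 1) / 4"
proof -
  have aa: "a \<bullet> a = 1" using assms by (simp add: norm_eq_1)
  show ?thesis unfolding prob_val T2_val[OF assms(2) assms(1)] T2_val[OF assms(1) assms(1)] aa
    by (simp add: inner_commute del: of_real_power of_real_diff)
qed

lemma four_cases: "x \<in> four_lists \<Longrightarrow> \<exists>p q r s. x = [p,q,r,s]"
  unfolding four_lists_eq by auto

theorem proposition6:
  fixes a b :: "real^3"
  assumes "norm a = 1" and "norm b = 1" and "b \<noteq> a" and "b \<noteq> - a"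
  shows "\<exists>\<rho> RA RB RQ.
     density4 \<rho> \<and>
     RA \<union> RB \<union> RQ = four_lists \<and>
     RA \<inter> RB = {} \<and> RA \<inter> RQ = {} \<and> RB \<inter> RQ = {} \<and>
     relabel_invariant RA \<and> relabel_invariant RB \<and> relabel_invariant RQ \<and>
     (\<forall>\<omega>\<in>RA. prob4 \<rho> b \<omega> = 0) \<and>
     (\<forall>\<omega>\<in>RB. prob4 \<rho> a \<omega> = 0) \<and>
     (\<forall>\<eta>::real. 0 \<le> \<eta> \<and> \<eta> \<le> 1 \<longrightarrow>
        \<eta> * prob4_set \<rho> a RA + (1 - \<eta>) * prob4_set \<rho> b RB \<ge> (sin (angle3 a b))\<^sup>2) \<and>
     prob4_set \<rho> a RA > 0 \<and> prob4_set \<rho> b RB > 0"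
proof -
  define c where "c = a \<bullet> b"
  have cle: "\<bar>c\<bar> \<le> 1" using Cauchy_Schwarz_ineq2[of a b] assms(1,2) by (simp add: c_def)
  have cne: "\<bar>c\<bar> \<noteq> 1"
  proof
    assume "\<bar>c\<bar> = 1"
    hence "norm a *\<^sub>R b = norm b *\<^sub>R a \<or> norm a *\<^sub>R b = - norm b *\<^sub>R a"
      using norm_cauchy_schwarz_abs_eq[of a b] assms(1,2) by (simp add: c_def)
    thus False using assms by auto
  qed
  have c2: "c^2 < 1" using cle cne by (simp add: abs_square_less_1)
  have sin2: "(sin (angle3 a b))^2 = 1 - c^2"
  proof -
    have "angle3 a b = arccos c" by (simp add: angle3_def assms c_def)
    moreover have "-1 \<le> c" "c \<le> 1" using cle by auto
    ultimately show ?thesis using c2 by (simp add: sin_arccos)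
  qed
  define RA where "RA = {\<omega>\<in>four_lists. \<omega>!0 = \<omega>!1}"
  define RB where "RB = {\<omega>\<in>four_lists. \<omega>!0 \<noteq> \<omega>!1 \<and> \<omega>!2 = \<omega>!3}"
  define RQ where "RQ = {\<omega>\<in>four_lists. \<omega>!0 \<noteq> \<omega>!1 \<and> \<omega>!2 \<noteq> \<omega>!3}"
  have inv: "relabel_invariant {\<omega>\<in>four_lists. P (\<omega>!0 = \<omega>!1) (\<omega>!2 = \<omega>!3)}" for P
    unfolding relabel_invariant_def
  proof
    fix \<omega> assume h: "\<omega> \<in> {\<omega> \<in> four_lists. P (\<omega> ! 0 = \<omega> ! 1) (\<omega> ! 2 = \<omega> ! 3)}"
    hence l: "length \<omega> = 4" and pp: "P (\<omega> ! 0 = \<omega> ! 1) (\<omega> ! 2 = \<omega> ! 3)"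
      by (simp_all add: four_lists_def)
    have "map Not \<omega> ! 0 = (\<not> \<omega> ! 0)" "map Not \<omega> ! 1 = (\<not> \<omega> ! 1)"
      "map Not \<omega> ! 2 = (\<not> \<omega> ! 2)" "map Not \<omega> ! 3 = (\<not> \<omega> ! 3)"
      using l by simp_all
    thus "map Not \<omega> \<in> {\<omega> \<in> four_lists. P (\<omega> ! 0 = \<omega> ! 1) (\<omega> ! 2 = \<omega> ! 3)}"
      using l pp by (simp add: four_lists_def)
  qed
  have pA: "prob4_set (rho b a) a RA = 1 - c^2"
    unfolding prob4_set_def RA_def sum.inter_filter[OF finite_four] sum_four
    by (simp add: UNIV_bool probA[OF assms(1,2)] c_def[symmetric])
  have pB: "prob4_set (rho b a) b RB = 1 - c^2"
    unfolding prob4_set_def RB_def sum.inter_filter[OF finite_four] sum_four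
    by (simp add: UNIV_bool probB[OF assms(1,2)] c_def[symmetric])
  have zA: "\<forall>\<omega>\<in>RA. prob4 (rho b a) b \<omega> = 0"
  proof
    fix \<omega> assume "\<omega> \<in> RA"
    hence h4: "\<omega> \<in> four_lists" and e: "\<omega>!0 = \<omega>!1" unfolding RA_def by simp_all
    from four_cases[OF h4] obtain p q r s where w: "\<omega> = [p,q,r,s]" by blast
    with e have "p = q" by simp
    note w this
    thus "prob4 (rho b a) b \<omega> = 0" by (simp add: probB[OF assms(1,2)])
  qed
  have zB: "\<forall>\<omega>\<in>RB. prob4 (rho b a) a \<omega> = 0"
  proof
    fix \<omega> assume "\<omega> \<in> RB"
    hence h4: "\<omega> \<in> four_lists" and e: "\<omega>!2 = \<omega>!3" unfolding RB_def by simp_all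
    from four_cases[OF h4] obtain p q r s where w: "\<omega> = [p,q,r,s]" by blast
    with e have "r = s" by simp
    note w this
    thus "prob4 (rho b a) a \<omega> = 0" by (simp add: probA[OF assms(1,2)])
  qed
  have "density4 (rho b a)" by (rule density_rho[OF assms(1,2)])
  moreover have "RA \<union> RB \<union> RQ = four_lists" "RA \<inter> RB = {}" "RA \<inter> RQ = {}" "RB \<inter> RQ = {}"
    unfolding RA_def RB_def RQ_def by auto
  moreover have "relabel_invariant RA" "relabel_invariant RB" "relabel_invariant RQ"
    unfolding RA_def RB_def RQ_def
    using inv[of "\<lambda>u v. u"] inv[of "\<lambda>u v. \<not> u \<and> v"] inv[of "\<lambda>u v. \<not> u \<and> \<not> v"] by simp_all
  moreover have "\<forall>\<eta>::real. 0 \<le> \<eta> \<and> \<eta> \<le> 1 \<longrightarrow>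
        \<eta> * prob4_set (rho b a) a RA + (1 - \<eta>) * prob4_set (rho b a) b RB \<ge> (sin (angle3 a b))\<^sup>2"
    unfolding pA pB sin2 by (simp add: algebra_simps)
  moreover have "prob4_set (rho b a) a RA > 0" "prob4_set (rho b a) b RB > 0"
    unfolding pA pB using c2 by simp_all
  ultimately show ?thesis using zA zB by blast
qed

end
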